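(* For any natural number $n\ge1$ and variables $x,y$, \[ \Psi(xy,\,-x^2-y^2,\,n)=\frac{x^n+y^n}{(x+y)^{\delta(n)}},\qquad \Phi(xy,\,-x^2-y^2,\,n)=\frac{x^n-y^n}{(x-y)(x+y)^{\delta(n-1)}}. \]
   Context: $\delta(m)=1$ for $m$ odd, $0$ for $m$ even. $\Psi(a,b,n)$, $\Phi(a,b,n)$ are defined by $\Psi(a,b,0)=2$, $\Psi(a,b,1)=1$, $\Psi(a,b,n+1)=(2a-b)^{\delta(n)}\Psi(a,b,n)-a\Psi(a,b,n-1)$ and $\Phi(a,b,0)=0$, $\Phi(a,b,1)=1$, $\Phi(a,b,n+1)=(2a-b)^{\delta(n+1)}\Phi(a,b,n)-a\Phi(a,b,n-1)$ for $n\ge1$. *)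

theory Defs
  imports Main
begin

definition delta :: "nat \<Rightarrow> nat" where
  "delta m = (if odd m then 1 else 0)"

fun Psi :: "'a::comm_ring_1 \<Rightarrow> 'a \<Rightarrow> nat \<Rightarrow> 'a" where
  "Psi a b 0 = 2"
| "Psi a b (Suc 0) = 1"
| "Psi a b (Suc (Suc n)) =
     (2*a - b) ^ delta (Suc n) * Psi a b (Suc n) - a * Psi a b n"

fun Phi :: "'a::comm_ring_1 \<Rightarrow> 'a \<Rightarrow> nat \<Rightarrow> 'a" where
  "Phi a b 0 = 0"
| "Phi a b (Suc 0) = 1"
| "Phi a b (Suc (Suc n)) =
     (2*a - b) ^ delta (Suc (Suc n)) * Phi a b (Suc n) - a * Phi a b n"

end

theory Submission
  imports Defs
begin

lemma psi_aux:
  fixes x y :: "'a::field"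
  shows "Psi (x*y) (- (x^2) - y^2) n * (x+y)^delta n = x^n + y^n \<and>
         Psi (x*y) (- (x^2) - y^2) (Suc n) * (x+y)^delta (Suc n) = x^Suc n + y^Suc n"
proof (induction n)
  case 0
  then show ?case by (simp add: delta_def)
next
  case (Suc n)
  let ?P = "Psi (x*y) (- (x^2) - y^2)"
  have e: "2*(x*y) - (- (x^2) - y^2) = (x+y)^2" by (simp add: power2_eq_square algebra_simps)
  have A: "?P n * (x+y)^delta n = x^n + y^n" and B: "?P (Suc n) * (x+y)^delta (Suc n) = x^Suc n + y^Suc n"
    using Suc by auto
  show ?case
  proof (cases "even n")
    case True
    then have d: "delta n = 0" "delta (Suc n) = 1" "delta (Suc (Suc n)) = 0" by (auto simp: delta_def)
    have "?P (Suc (Suc n)) = (x+y)^2 * ?P (Suc n) - x*y * ?P n" by (simp add: e d)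
    also have "\<dots> = (x+y) * (?P (Suc n) * (x+y)) - x*y * ?P n" by (simp add: power2_eq_square algebra_simps)
    also have "\<dots> = x^Suc (Suc n) + y^Suc (Suc n)" using A B d by (simp add: algebra_simps)
    finally show ?thesis using B d by simp
  next
    case False
    then have d: "delta n = 1" "delta (Suc n) = 0" "delta (Suc (Suc n)) = 1" by (auto simp: delta_def)
    have "?P (Suc (Suc n)) * (x+y) = ?P (Suc n) * (x+y) - x*y * (?P n * (x+y))" by (simp add: e d algebra_simps)
    also have "\<dots> = x^Suc (Suc n) + y^Suc (Suc n)" using A B d by (simp add: algebra_simps)
    finally show ?thesis using B d by simp
  qed
qed

lemma phi_aux:
  fixes x y :: "'a::field"
  shows "Phi (x*y) (- (x^2) - y^2) n * ((x-y)*(x+y)^delta (n-1)) = x^n - y^n \<and>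
         Phi (x*y) (- (x^2) - y^2) (Suc n) * ((x-y)*(x+y)^delta n) = x^Suc n - y^Suc n"
proof (induction n)
  case 0
  then show ?case by (simp add: delta_def)
next
  case (Suc n)
  let ?P = "Phi (x*y) (- (x^2) - y^2)"
  have e: "2*(x*y) - (- (x^2) - y^2) = (x+y)^2" by (simp add: power2_eq_square algebra_simps)
  have A: "?P n * ((x-y)*(x+y)^delta (n-1)) = x^n - y^n" and B: "?P (Suc n) * ((x-y)*(x+y)^delta n) = x^Suc n - y^Suc n"
    using Suc by auto
  show ?case
  proof (cases "even n")
    case True
    then have d: "delta n = 0" "delta (Suc n) = 1" "delta (Suc (Suc n)) = 0" by (auto simp: delta_def)
    have d2: "delta (n-1) = (if n = 0 then 0 else 1)" using True by (auto simp: delta_def)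
    have "?P (Suc (Suc n)) * ((x-y)*(x+y)) = ?P (Suc n) * (x-y) * (x+y) - x*y * (?P n * (x-y)*(x+y))" by (simp add: e d algebra_simps)
    also have "\<dots> = x^Suc (Suc n) - y^Suc (Suc n)"
    proof (cases "n = 0")
      case True then show ?thesis by (simp add: algebra_simps power2_eq_square)
    next
      case False
      then have "?P n * ((x-y)*(x+y)) = x^n - y^n" using A d2 by simp
      have B': "?P (Suc n) * (x-y) = x^Suc n - y^Suc n" using B d by simp
      have "?P (Suc n) * (x-y) * (x+y) - x*y * (?P n * (x-y)*(x+y))
            = (x^Suc n - y^Suc n) * (x+y) - x*y * (x^n - y^n)"
        using B' \<open>?P n * ((x-y)*(x+y)) = x^n - y^n\<close> by (simp add: mult.assoc)
      then show ?thesis by (simp add: algebra_simps)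
    qed
    finally show ?thesis using B d by simp
  next
    case False
    then have d: "delta n = 1" "delta (Suc n) = 0" "delta (Suc (Suc n)) = 1" "delta (n-1) = 0" by (auto simp: delta_def)
    have "?P (Suc (Suc n)) = (x+y)^2 * ?P (Suc n) - x*y * ?P n" by (simp add: e d)
    then have "?P (Suc (Suc n)) * (x-y) = (x+y) * (?P (Suc n) * ((x-y)*(x+y))) - x*y * (?P n * (x-y))"
      by (simp add: power2_eq_square algebra_simps)
    also have "\<dots> = (x+y) * (x^Suc n - y^Suc n) - x*y * (x^n - y^n)"
      using A B d by simp
    also have "\<dots> = x^Suc (Suc n) - y^Suc (Suc n)" by (simp add: algebra_simps)
    finally show ?thesis using B d by simp
  qed
qed

theorem theorem11p1:
  fixes x y :: "'a::field" and n :: nat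
  assumes "n \<ge> 1" and "x \<noteq> y" and "x + y \<noteq> 0"
  shows "(Psi (x*y) (- (x^2) - y^2) n = (x^n + y^n) / (x + y) ^ delta n) \<and>
        (
         Phi (x*y) (- (x^2) - y^2) n = (x^n - y^n) / ((x - y) * (x + y) ^ delta (n - 1)))"
proof
  have "(x+y)^delta n \<noteq> 0" using assms by simp
  then show "Psi (x*y) (- (x^2) - y^2) n = (x^n + y^n) / (x + y) ^ delta n"
    using psi_aux[of x y n] by (simp add: eq_divide_eq)
next
  have "(x-y)*(x+y)^delta (n-1) \<noteq> 0" using assms by simp
  then show "Phi (x*y) (- (x^2) - y^2) n = (x^n - y^n) / ((x - y) * (x + y) ^ delta (n - 1))"
    using phi_aux[of x y n] by (simp add: eq_divide_eq)
qed

end
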